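(* Let $X$ be an L-space and $U,V\in{\sf ClopUp}(X)$. (1) $\mathrm{core}\,U\subseteq\ker U\subseteq U$. (2) If $U\subseteq V$ then $\mathrm{core}\,U\subseteq\mathrm{core}\,V$. (3) If $X$ is an algebraic L-space, then $X$ is a continuous L-space. (4) $U$ is a Scott upset if and only if $\mathrm{core}\,U=U$.
   Context: A Priestley space is a Stone space $X$ with a partial order such that clopen upsets separate points. An L-space is a Priestley space in which the downset of each clopen set is clopen and the closure of each open upset is open. ${\sf ClopUp}(X)$ is the set of clopen upsets of $X$; $\mathrm{cl}$ denotes closure. The spatial part of $X$ is $Y=\{y\in X\mid{\downarrow}y\text{ is clopen}\}$. A Scott upset is a closed upset $F$ with $\min F\subseteq Y$; ${\sf ClopSUp}(X)$ is the set of clopen Scott upsets. For $U,V\in{\sf ClopUp}(X)$, write $V\ll U$ if for every open upset $W$ of $X$, $U\subseteq\mathrm{cl}\,W$ implies $V\subseteq W$. Define $\ker U=\bigcup\{V\in{\sf ClopUp}(X)\mid V\ll U\}$ and $\mathrm{core}\,U=\bigcup\{V\in{\sf ClopSUp}(X)\mid V\subseteq U\}$. $X$ is a continuous L-space if $\ker U$ is dense in $U$ for all $U\in{\sf ClopUp}(X)$, and an algebraic L-space if $\mathrm{core}\,U$ is dense in $U$ for all $U\in{\sf ClopUp}(X)$. *)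

theory Defs
  imports "HOL-Analysis.Analysis"
begin

definition clopen_in :: "'a topology \<Rightarrow> 'a set \<Rightarrow> bool" where
  "clopen_in T U \<longleftrightarrow> openin T U \<and> closedin T U"

definition stone_space :: "'a topology \<Rightarrow> bool" where
  "stone_space T \<longleftrightarrow> compact_space T \<and> Hausdorff_space T \<and>
     (\<forall>W x. openin T W \<and> x \<in> W \<longrightarrow> (\<exists>C. clopen_in T C \<and> x \<in> C \<and> C \<subseteq> W))"

definition partial_order_on_space :: "'a topology \<Rightarrow> ('a \<Rightarrow> 'a \<Rightarrow> bool) \<Rightarrow> bool" where
  "partial_order_on_space T le \<longleftrightarrow>
     (\<forall>x\<in>topspace T. le x x) \<and>
     (\<forall>x\<in>topspace T. \<forall>y\<in>topspace T. le x y \<and> le y x \<longrightarrow> x = y) \<and>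
     (\<forall>x\<in>topspace T. \<forall>y\<in>topspace T. \<forall>z\<in>topspace T. le x y \<and> le y z \<longrightarrow> le x z)"

definition upset :: "'a topology \<Rightarrow> ('a \<Rightarrow> 'a \<Rightarrow> bool) \<Rightarrow> 'a set \<Rightarrow> bool" where
  "upset T le U \<longleftrightarrow> U \<subseteq> topspace T \<and>
     (\<forall>x\<in>U. \<forall>y\<in>topspace T. le x y \<longrightarrow> y \<in> U)"

definition downset_of :: "'a topology \<Rightarrow> ('a \<Rightarrow> 'a \<Rightarrow> bool) \<Rightarrow> 'a set \<Rightarrow> 'a set" where
  "downset_of T le A = {y \<in> topspace T. \<exists>x\<in>A. le y x}"

definition priestley_space :: "'a topology \<Rightarrow> ('a \<Rightarrow> 'a \<Rightarrow> bool) \<Rightarrow> bool" where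
  "priestley_space T le \<longleftrightarrow> stone_space T \<and> partial_order_on_space T le \<and>
     (\<forall>x\<in>topspace T. \<forall>y\<in>topspace T. \<not> le x y \<longrightarrow>
        (\<exists>U. clopen_in T U \<and> upset T le U \<and> x \<in> U \<and> y \<notin> U))"

definition L_space :: "'a topology \<Rightarrow> ('a \<Rightarrow> 'a \<Rightarrow> bool) \<Rightarrow> bool" where
  "L_space T le \<longleftrightarrow> priestley_space T le \<and>
     (\<forall>U. clopen_in T U \<longrightarrow> clopen_in T (downset_of T le U)) \<and>
     (\<forall>W. openin T W \<and> upset T le W \<longrightarrow> openin T (T closure_of W))"

definition ClopUp :: "'a topology \<Rightarrow> ('a \<Rightarrow> 'a \<Rightarrow> bool) \<Rightarrow> 'a set set" where
  "ClopUp T le = {U. clopen_in T U \<and> upset T le U}"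

definition spatial_part :: "'a topology \<Rightarrow> ('a \<Rightarrow> 'a \<Rightarrow> bool) \<Rightarrow> 'a set" where
  "spatial_part T le = {y \<in> topspace T. clopen_in T (downset_of T le {y})}"

definition min_elems :: "('a \<Rightarrow> 'a \<Rightarrow> bool) \<Rightarrow> 'a set \<Rightarrow> 'a set" where
  "min_elems le F = {x \<in> F. \<forall>y\<in>F. le y x \<longrightarrow> y = x}"

definition scott_upset :: "'a topology \<Rightarrow> ('a \<Rightarrow> 'a \<Rightarrow> bool) \<Rightarrow> 'a set \<Rightarrow> bool" where
  "scott_upset T le F \<longleftrightarrow> closedin T F \<and> upset T le F \<and>
     min_elems le F \<subseteq> spatial_part T le"

definition ClopSUp :: "'a topology \<Rightarrow> ('a \<Rightarrow> 'a \<Rightarrow> bool) \<Rightarrow> 'a set set" where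
  "ClopSUp T le = {U. clopen_in T U \<and> scott_upset T le U}"

definition way_below :: "'a topology \<Rightarrow> ('a \<Rightarrow> 'a \<Rightarrow> bool) \<Rightarrow> 'a set \<Rightarrow> 'a set \<Rightarrow> bool" where
  "way_below T le V U \<longleftrightarrow>
     (\<forall>W. openin T W \<and> upset T le W \<and> U \<subseteq> T closure_of W \<longrightarrow> V \<subseteq> W)"

definition ker :: "'a topology \<Rightarrow> ('a \<Rightarrow> 'a \<Rightarrow> bool) \<Rightarrow> 'a set \<Rightarrow> 'a set" where
  "ker T le U = \<Union>{V \<in> ClopUp T le. way_below T le V U}"

definition core :: "'a topology \<Rightarrow> ('a \<Rightarrow> 'a \<Rightarrow> bool) \<Rightarrow> 'a set \<Rightarrow> 'a set" where
  "core T le U = \<Union>{V \<in> ClopSUp T le. V \<subseteq> U}"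

definition dense_in :: "'a topology \<Rightarrow> 'a set \<Rightarrow> 'a set \<Rightarrow> bool" where
  "dense_in T A U \<longleftrightarrow> U \<subseteq> T closure_of A"

definition continuous_L_space :: "'a topology \<Rightarrow> ('a \<Rightarrow> 'a \<Rightarrow> bool) \<Rightarrow> bool" where
  "continuous_L_space T le \<longleftrightarrow> L_space T le \<and>
     (\<forall>U\<in>ClopUp T le. dense_in T (ker T le U) U)"

definition algebraic_L_space :: "'a topology \<Rightarrow> ('a \<Rightarrow> 'a \<Rightarrow> bool) \<Rightarrow> bool" where
  "algebraic_L_space T le \<longleftrightarrow> L_space T le \<and>
     (\<forall>U\<in>ClopUp T le. dense_in T (core T le U) U)"

end

theory Submission
  imports Defs
begin

lemma downset_closed:
  assumes P: "priestley_space T le" and x: "x \<in> topspace T"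
  shows "closedin T (downset_of T le {x})"
proof -
  have "openin T (topspace T - downset_of T le {x})"
  proof (subst openin_subopen, intro ballI)
    fix y assume y: "y \<in> topspace T - downset_of T le {x}"
    then have "\<not> le y x" "y \<in> topspace T" by (auto simp: downset_of_def)
    then obtain U where U: "clopen_in T U" "upset T le U" "y \<in> U" "x \<notin> U"
      using P x unfolding priestley_space_def by blast
    have "U \<subseteq> topspace T - downset_of T le {x}"
      using U x unfolding upset_def downset_of_def by blast
    then show "\<exists>U'. openin T U' \<and> y \<in> U' \<and> U' \<subseteq> topspace T - downset_of T le {x}"
      using U clopen_in_def by blast
  qed
  moreover have "downset_of T le {x} \<subseteq> topspace T" by (auto simp: downset_of_def)
  ultimately show ?thesis by (simp add: closedin_def double_diff)
qed

lemma finite_chain_min: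
  assumes "finite G" "G \<noteq> {}" "G \<subseteq> C" "\<forall>a\<in>C. \<forall>b\<in>C. R a b \<or> R b a"
    and tr: "\<And>a b c. a \<in> C \<Longrightarrow> b \<in> C \<Longrightarrow> c \<in> C \<Longrightarrow> R a b \<Longrightarrow> R b c \<Longrightarrow> R a c"
    and rf: "\<And>a. a \<in> C \<Longrightarrow> R a a"
  shows "\<exists>g\<in>G. \<forall>a\<in>G. R g a"
  using assms(1,2,3)
proof (induction G rule: finite_ne_induct)
  case (singleton x) then show ?case using rf by auto
next
  case (insert x F)
  then obtain g where g: "g \<in> F" "\<forall>a\<in>F. R g a" by auto
  have "x \<in> C" "g \<in> C" "F \<subseteq> C" using insert g by auto
  then consider "R x g" | "R g x" using assms(4) by blast
  then show ?case
  proof cases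
    case 1
    have "\<forall>a\<in>insert x F. R x a"
    proof
      fix a assume a: "a \<in> insert x F"
      show "R x a"
      proof (cases "a = x")
        case True then show ?thesis using rf \<open>x \<in> C\<close> by simp
      next
        case False then have "a \<in> F" using a by simp
        then have "a \<in> C" "R g a" using g \<open>F \<subseteq> C\<close> by auto
        then show ?thesis using tr[OF \<open>x \<in> C\<close> \<open>g \<in> C\<close> \<open>a \<in> C\<close> 1] by simp
      qed
    qed
    then show ?thesis by blast
  next
    case 2 then show ?thesis using g by auto
  qed
qed

lemma min_exists:
  assumes P: "priestley_space T le" and F: "closedin T F" and x: "x \<in> F"
  shows "\<exists>m\<in>min_elems le F. le m x"
proof -
  have Ft: "F \<subseteq> topspace T" using F closedin_subset by blast
  have po: "partial_order_on_space T le" and cs: "compact_space T"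
    using P by (auto simp: priestley_space_def stone_space_def)
  define S where "S = {y \<in> F. le y x}"
  define r where "r = {(a, b). a \<in> S \<and> b \<in> S \<and> le b a}"
  have xS: "x \<in> S" using x Ft po by (auto simp: S_def partial_order_on_space_def)
  have St: "S \<subseteq> topspace T" using Ft S_def by auto
  have Fr: "Field r = S"
    using St po xS unfolding r_def Field_def partial_order_on_space_def by auto
  have lrefl: "\<And>a. a \<in> topspace T \<Longrightarrow> le a a"
    and lanti: "\<And>a b. a \<in> topspace T \<Longrightarrow> b \<in> topspace T \<Longrightarrow> le a b \<Longrightarrow> le b a \<Longrightarrow> a = b"
    and ltrans: "\<And>a b c. a \<in> topspace T \<Longrightarrow> b \<in> topspace T \<Longrightarrow> c \<in> topspace T \<Longrightarrow> le a b \<Longrightarrow> le b c \<Longrightarrow> le a c"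
    using po unfolding partial_order_on_space_def by blast+
  have PO: "Partial_order r"
    unfolding partial_order_on_def preorder_on_def Fr
  proof (intro conjI)
    show "refl_on S r" unfolding refl_on_def r_def using St lrefl by blast
    show "trans r" unfolding trans_def r_def using St ltrans by blast
    show "antisym r" unfolding antisym_def r_def using St lanti by blast
  qed (auto simp: r_def)
  have "\<exists>m\<in>Field r. \<forall>a\<in>Field r. (m, a) \<in> r \<longrightarrow> a = m"
  proof (rule Zorns_po_lemma[OF PO])
    fix C assume C: "C \<in> Chains r"
    have CS: "C \<subseteq> S" using C unfolding Chains_def r_def by blast
    show "\<exists>u\<in>Field r. \<forall>a\<in>C. (a, u) \<in> r"
    proof (cases "C = {}")
      case True then show ?thesis using xS Fr by auto
    next
      case False
      define \<U> where "\<U> = (\<lambda>a. F \<inter> downset_of T le {a}) ` C"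
      have cl: "\<forall>D\<in>\<U>. closedin T D"
        using CS St F downset_closed[OF P] by (auto simp: \<U>_def intro!: closedin_Int)
      have fip: "\<forall>\<F>. finite \<F> \<and> \<F> \<subseteq> \<U> \<longrightarrow> \<Inter>\<F> \<noteq> {}"
      proof (intro allI impI)
        fix \<F> assume H: "finite \<F> \<and> \<F> \<subseteq> \<U>"
        show "\<Inter>\<F> \<noteq> {}"
        proof (cases "\<F> = {}")
          case True then show ?thesis by simp
        next
          case False
          obtain G where G: "G \<subseteq> C" "finite G" "\<F> = (\<lambda>a. F \<inter> downset_of T le {a}) ` G"
            using H unfolding \<U>_def by (meson finite_subset_image)
          have "G \<noteq> {}" using G False by auto
          have ch: "\<forall>a\<in>C. \<forall>b\<in>C. le a b \<or> le b a"
            using C unfolding Chains_def r_def by blast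
          have CT: "\<And>a. a \<in> C \<Longrightarrow> a \<in> topspace T" using CS St by auto
          obtain g where g: "g \<in> G" "\<forall>a\<in>G. le g a"
            using finite_chain_min[of G C le, OF G(2) \<open>G \<noteq> {}\<close> G(1) ch]
              ltrans[OF CT CT CT] lrefl[OF CT] by blast
          have "g \<in> \<Inter>\<F>" using G g CS St S_def unfolding downset_of_def by auto
          then show ?thesis by auto
        qed
      qed
      have "\<Inter>\<U> \<noteq> {}"
        using cs cl fip unfolding compact_space_fip by blast
      then obtain u where u: "u \<in> \<Inter>\<U>" by blast
      obtain c where c: "c \<in> C" using False by auto
      have uF: "u \<in> F" and ua: "\<forall>a\<in>C. le u a" and ut: "u \<in> topspace T"
        using u c False unfolding \<U>_def downset_of_def by auto
      have cS: "c \<in> S" using c CS by auto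
      then have "le c x" "c \<in> topspace T" using St S_def by auto
      moreover have "x \<in> topspace T" using x Ft by auto
      ultimately have "le u x" using ltrans[OF ut _ _ _ \<open>le c x\<close>] ua c by blast
      then have "u \<in> S" using uF S_def by auto
      then show ?thesis using Fr ua CS unfolding r_def by auto
    qed
  qed
  then obtain m where m: "m \<in> S" "\<forall>a\<in>S. le a m \<longrightarrow> a = m"
    using Fr unfolding r_def by auto
  have "m \<in> min_elems le F"
    unfolding min_elems_def
  proof (safe)
    show "m \<in> F" using m S_def by auto
  next
    fix y assume "y \<in> F" "le y m"
    moreover have "y \<in> topspace T" "m \<in> topspace T" "x \<in> topspace T" "le m x"
      using \<open>y \<in> F\<close> m Ft x S_def by auto
    ultimately have "le y x" using ltrans by blast
    then show "y = m" using m \<open>y \<in> F\<close> \<open>le y m\<close> S_def by auto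
  qed
  then show ?thesis using m S_def by auto
qed


lemma ker_sub:
  assumes "U \<in> ClopUp T le"
  shows "ker T le U \<subseteq> U"
proof -
  have U: "openin T U" "closedin T U" "upset T le U"
    using assms by (auto simp: ClopUp_def clopen_in_def)
  have "U \<subseteq> T closure_of U" using U(2) closure_of_subset closedin_subset by metis
  show ?thesis
  proof
    fix x assume "x \<in> ker T le U"
    then obtain V where "way_below T le V U" "x \<in> V" unfolding ker_def by blast
    then show "x \<in> U" using U \<open>U \<subseteq> T closure_of U\<close> unfolding way_below_def by blast
  qed
qed

lemma core_sub_ker:
  assumes P: "priestley_space T le" and "U \<in> ClopUp T le"
  shows "core T le U \<subseteq> ker T le U"
proof
  fix z0 assume "z0 \<in> core T le U"
  then obtain V where V: "V \<in> ClopSUp T le" "V \<subseteq> U" "z0 \<in> V" unfolding core_def by blast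
  have Vc: "clopen_in T V" and Vs: "scott_upset T le V" using V by (auto simp: ClopSUp_def)
  then have Vu: "upset T le V" and Vcl: "closedin T V" by (auto simp: scott_upset_def)
  have po: "partial_order_on_space T le" using P by (auto simp: priestley_space_def)
  have "way_below T le V U"
    unfolding way_below_def
  proof (intro allI impI subsetI)
    fix W z assume W: "openin T W \<and> upset T le W \<and> U \<subseteq> T closure_of W" and z: "z \<in> V"
    obtain m where m: "m \<in> min_elems le V" "le m z" using min_exists[OF P Vcl z] by blast
    have mV: "m \<in> V" using m by (auto simp: min_elems_def)
    have mt: "m \<in> topspace T" using mV Vu by (auto simp: upset_def)
    have "m \<in> spatial_part T le" using m Vs by (auto simp: scott_upset_def)
    then have od: "openin T (downset_of T le {m})" by (auto simp: spatial_part_def clopen_in_def)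
    have md: "m \<in> downset_of T le {m}" using mt po by (auto simp: downset_of_def partial_order_on_space_def)
    have "m \<in> T closure_of W" using W V(2) mV by blast
    then have "\<exists>y. y \<in> W \<and> y \<in> downset_of T le {m}"
      using od md unfolding in_closure_of by blast
    then obtain w where w: "w \<in> W" "w \<in> downset_of T le {m}" by blast
    then have "le w m" by (auto simp: downset_of_def)
    then have "m \<in> W" using W w mt by (auto simp: upset_def)
    moreover have "z \<in> topspace T" using z Vu by (auto simp: upset_def)
    ultimately show "z \<in> W" using W m by (auto simp: upset_def)
  qed
  moreover have "V \<in> ClopUp T le" using Vc Vu by (auto simp: ClopUp_def)
  ultimately show "z0 \<in> ker T le U" using V unfolding ker_def by blast
qed

theorem lemma4p2:
  fixes T :: "'a topology" and le :: "'a \<Rightarrow> 'a \<Rightarrow> bool" and U V :: "'a set"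
  assumes "L_space T le"
    and "U \<in> ClopUp T le" and "V \<in> ClopUp T le"
  shows "(core T le U \<subseteq> ker T le U \<and> ker T le U \<subseteq> U)
    \<and> (U \<subseteq> V \<longrightarrow> core T le U \<subseteq> core T le V)
    \<and> (algebraic_L_space T le \<longrightarrow> continuous_L_space T le)
    \<and> (scott_upset T le U \<longleftrightarrow> core T le U = U)"
proof (intro conjI impI)
  have P: "priestley_space T le" using assms(1) by (simp add: L_space_def)
  show "core T le U \<subseteq> ker T le U" using core_sub_ker[OF P assms(2)] .
  show "ker T le U \<subseteq> U" using ker_sub[OF assms(2)] .
  show "core T le U \<subseteq> core T le V" if "U \<subseteq> V" using that unfolding core_def by blast
  show "continuous_L_space T le" if A: "algebraic_L_space T le"
    unfolding continuous_L_space_def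
  proof (intro conjI ballI)
    show "L_space T le" by fact
    fix U' assume U': "U' \<in> ClopUp T le"
    have "U' \<subseteq> T closure_of (core T le U')" using A U' by (auto simp: algebraic_L_space_def dense_in_def)
    also have "\<dots> \<subseteq> T closure_of (ker T le U')"
      using closure_of_mono[OF core_sub_ker[OF P U']] .
    finally show "dense_in T (ker T le U') U'" by (simp add: dense_in_def)
  qed
  show "scott_upset T le U \<longleftrightarrow> core T le U = U"
  proof
    assume "scott_upset T le U"
    then have "U \<in> ClopSUp T le" using assms(2) by (auto simp: ClopSUp_def ClopUp_def)
    then show "core T le U = U" unfolding core_def by blast
  next
    assume cU: "core T le U = U"
    have "min_elems le U \<subseteq> spatial_part T le"
    proof
      fix m assume m: "m \<in> min_elems le U"
      then have "m \<in> core T le U" using cU by (auto simp: min_elems_def)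
      then obtain W where W: "W \<in> ClopSUp T le" "W \<subseteq> U" "m \<in> W" unfolding core_def by blast
      then have "m \<in> min_elems le W" using m by (auto simp: min_elems_def)
      then show "m \<in> spatial_part T le" using W by (auto simp: ClopSUp_def scott_upset_def)
    qed
    then show "scott_upset T le U" using assms(2)
      by (auto simp: scott_upset_def ClopUp_def clopen_in_def)
  qed
qed

end
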